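(* Consider the discrete-time LTI system $x^+ = A^\star x + B^\star u$, $y = C^\star x$ with $x\in\mathbb{R}^n$, $u\in\mathbb{R}^m$, $y\in\mathbb{R}^p$, where $(A^\star,C^\star)$ is observable with observability index $\ell^\star$. Let $\mathcal{O}_{\ell^\star} := \begin{bmatrix} C^\star \\ C^\star A^\star \\ \vdots \\ C^\star {A^\star}^{\ell^\star-1}\end{bmatrix}\in\mathbb{R}^{p\ell^\star\times n}$, let $\mathcal{O}_{\ell^\star}^{\mathrm{L}}$ be a left inverse of it ($\mathcal{O}_{\ell^\star}^{\mathrm{L}}\mathcal{O}_{\ell^\star}=I_n$), let $\mathcal{T}_{\ell^\star}\in\mathbb{R}^{p\ell^\star\times m\ell^\star}$ be the block lower-triangular Toeplitz matrix whose $(i,j)$ block ($i,j=1,\dots,\ell^\star$) is $C^\star {A^\star}^{i-j-1}B^\star$ if $i>j$ and $0_{p\times m}$ otherwise, and let $\mathcal{R}_{\ell^\star} := \begin{bmatrix} {A^\star}^{\ell^\star-1}B^\star & \cdots & A^\star B^\star & B^\star\end{bmatrix}$. Define $Z_{1\ell^\star} := C^\star {A^\star}^{\ell^\star}\mathcal{O}_{\ell^\star}^{\mathrm{L}}$, $Z_{2\ell^\star} := C^\star\mathcal{R}_{\ell^\star} - C^\star {A^\star}^{\ell^\star}\mathcal{O}_{\ell^\star}^{\mathrm{L}}\mathcal{T}_{\ell^\star}$, $Z_{\ell^\star} := \begin{bmatrix} Z_{1\ell^\star} & Z_{2\ell^\star}\end{bmatrix}$. Let $\mathbf{F}_{\ell^\star}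 := \mathrm{blockdiag}(S_p, S_m)$, where $S_p\in\mathbb{R}^{p\ell^\star\times p\ell^\star}$ (resp. $S_m\in\mathbb{R}^{m\ell^\star\times m\ell^\star}$) is the block shift matrix with identity blocks $I_p$ (resp. $I_m$) on the first block superdiagonal and zeros elsewhere; let $\mathbf{L}_{\ell^\star}\in\mathbb{R}^{(p+m)\ell^\star\times p}$ have $I_p$ in its $\ell^\star$-th block row of size $p$ and zeros elsewhere, and let $\mathbf{B}_{\ell^\star}\in\mathbb{R}^{(p+m)\ell^\star\times m}$ have $I_m$ as its last block row (of size $m$) and zeros elsewhere. Set $\mathbf{A}_{\ell^\star} := \mathbf{F}_{\ell^\star} + \mathbf{L}_{\ell^\star} Z_{\ell^\star}$ and $\mathbf{B}^{\mathrm{d}}_{\ell^\star} := \mathbf{L}_{\ell^\star}\begin{bmatrix} I_p & -Z_{1\ell^\star} & -Z_{2\ell^\star}\end{bmatrix}$. Data are collected for $k=0,\dots,T$: the measured input is $u^{\mathrm{m}}(k) = u(k) + d^u(k)$ and the measured output is $y^{\mathrm{m}}(k) = y(k) + d^y(k)$, where $u(k)$ is the actual input, $y(k)=C^\star x(k)$ the actual output, and $d^u,d^y$ unknown noise. Define $\Psi_1 := \begin{bmatrix} y^{\mathrm{m}}(1) & \cdots & y^{\mathrm{m}}(T-\ell^\star+1)\\ \vdots & & \vdots\\ y^{\mathrm{m}}(\ell^\star) & \cdots & y^{\mathrm{m}}(T)\\ u^{\mathrm{m}}(1) & \cdots & u^{\mathrm{m}}(T-\ell^\star+1)\\ \vdots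 & & \vdots\\ u^{\mathrm{m}}(\ell^\star) & \cdots & u^{\mathrm{m}}(T)\end{bmatrix}$, $\Psi_0 := \begin{bmatrix} y^{\mathrm{m}}(0) & \cdots & y^{\mathrm{m}}(T-\ell^\star)\\ \vdots & & \vdots\\ y^{\mathrm{m}}(\ell^\star-1) & \cdots & y^{\mathrm{m}}(T-1)\\ u^{\mathrm{m}}(0) & \cdots & u^{\mathrm{m}}(T-\ell^\star)\\ \vdots & & \vdots\\ u^{\mathrm{m}}(\ell^\star-1) & \cdots & u^{\mathrm{m}}(T-1)\end{bmatrix}$, $U_1 := \begin{bmatrix} u^{\mathrm{m}}(\ell^\star) & \cdots & u^{\mathrm{m}}(T)\end{bmatrix}$, $\Delta_{10} := \begin{bmatrix} d^y(\ell^\star) & \cdots & d^y(T)\\ d^y(0) & \cdots & d^y(T-\ell^\star)\\ \vdots & & \vdots\\ d^y(\ell^\star-1) & \cdots & d^y(T-1)\\ d^u(0) & \cdots & d^u(T-\ell^\star)\\ \vdots & & \vdots\\ d^u(\ell^\star-1) & \cdots & d^u(T-1)\end{bmatrix}$. Then the data satisfy, for $k=\ell^\star,\dots,T$, $y^{\mathrm{m}}(k) = Z_{1\ell^\star}\begin{bmatrix} y^{\mathrm{m}}(k-\ell^\star)\\ \vdots\\ y^{\mathrm{m}}(k-1)\end{bmatrix} + Z_{2\ell^\star}\begin{bmatrix} u^{\mathrm{m}}(k-\ell^\star)\\ \vdots\\ u^{\mathrm{m}}(k-1)\end{bmatrix} - Z_{1\ell^\star}\begin{bmatrix} d^y(k-\ell^\star)\\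 \vdots\\ d^y(k-1)\end{bmatrix} - Z_{2\ell^\star}\begin{bmatrix} d^u(k-\ell^\star)\\ \vdots\\ d^u(k-1)\end{bmatrix} + d^y(k)$, and $\begin{bmatrix} y^{\mathrm{m}}(k-\ell^\star+1)\\ \vdots\\ y^{\mathrm{m}}(k)\\ u^{\mathrm{m}}(k-\ell^\star+1)\\ \vdots\\ u^{\mathrm{m}}(k)\end{bmatrix} = (\mathbf{F}_{\ell^\star} + \mathbf{L}_{\ell^\star}[Z_{1\ell^\star}\ Z_{2\ell^\star}])\begin{bmatrix} y^{\mathrm{m}}(k-\ell^\star)\\ \vdots\\ y^{\mathrm{m}}(k-1)\\ u^{\mathrm{m}}(k-\ell^\star)\\ \vdots\\ u^{\mathrm{m}}(k-1)\end{bmatrix} + \mathbf{B}_{\ell^\star} u^{\mathrm{m}}(k) + \mathbf{L}_{\ell^\star}[I_p\ -Z_{1\ell^\star}\ -Z_{2\ell^\star}]\begin{bmatrix} d^y(k)\\ d^y(k-\ell^\star)\\ \vdots\\ d^y(k-1)\\ d^u(k-\ell^\star)\\ \vdots\\ d^u(k-1)\end{bmatrix}$, and, in matrix form, $\Psi_1 = (\mathbf{F}_{\ell^\star} + \mathbf{L}_{\ell^\star} Z_{\ell^\star})\Psi_0 + \mathbf{B}_{\ell^\star} U_1 + \mathbf{L}_{\ell^\star}[I_p\ -Z_{\ell^\star}]\Delta_{10} = \mathbf{A}_{\ell^\star}\Psi_0 + \mathbf{B}_{\ell^\star} U_1 + \mathbf{B}^{\mathrm{d}}_{\ell^\star}\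Delta_{10}$.
   Context: Unknown system $(A^\star,B^\star,C^\star)$; only the observability index $\ell^\star$ is known. Noisy input-output data $\{u^{\mathrm{m}}(k),y^{\mathrm{m}}(k)\}_{k=0}^T$ are collected from an experiment on the system with additive input noise $d^u$ and output noise $d^y$. All definitions needed are given in the claim. *)

theory Defs
  imports "Jordan_Normal_Form.DL_Rank"
begin

text \<open>Block indices are 0-based internally: block row i (0-based) of a stacked matrix
 with blocks of height q occupies rows q*i .. q*i+q-1.\<close>

definition hcat :: "real mat \<Rightarrow> real mat \<Rightarrow> real mat" where
  "hcat X Y = mat (dim_row X) (dim_col X + dim_col Y)
     (\<lambda>(i,j). if j < dim_col X then X $$ (i,j) else Y $$ (i, j - dim_col X))"

definition vcat :: "real mat \<Rightarrow> real mat \<Rightarrow> real mat" where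
  "vcat X Y = mat (dim_row X + dim_row Y) (dim_col X)
     (\<lambda>(i,j). if i < dim_row X then X $$ (i,j) else Y $$ (i - dim_row X, j))"

definition blockdiag :: "real mat \<Rightarrow> real mat \<Rightarrow> real mat" where
  "blockdiag X Y = four_block_mat X (0\<^sub>m (dim_row X) (dim_col Y)) (0\<^sub>m (dim_row Y) (dim_col X)) Y"

definition obsv_mat :: "real mat \<Rightarrow> real mat \<Rightarrow> nat \<Rightarrow> real mat" where
  "obsv_mat C A l = mat (dim_row C * l) (dim_col A)
     (\<lambda>(i,j). (C * A ^\<^sub>m (i div dim_row C)) $$ (i mod dim_row C, j))"

definition observable :: "real mat \<Rightarrow> real mat \<Rightarrow> bool" where
  "observable C A \<longleftrightarrow>
     vec_space.rank (dim_row C * dim_col A) (obsv_mat C A (dim_col A)) = dim_col A"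

definition obs_index :: "real mat \<Rightarrow> real mat \<Rightarrow> nat" where
  "obs_index C A = (LEAST l. vec_space.rank (dim_row C * l) (obsv_mat C A l) = dim_col A)"

definition toeplitz_mat :: "real mat \<Rightarrow> real mat \<Rightarrow> real mat \<Rightarrow> nat \<Rightarrow> real mat" where
  "toeplitz_mat C A B l = mat (dim_row C * l) (dim_col B * l)
     (\<lambda>(i,j). if i div dim_row C > j div dim_col B
              then (C * A ^\<^sub>m (i div dim_row C - j div dim_col B - 1) * B)
                     $$ (i mod dim_row C, j mod dim_col B)
              else 0)"

definition reach_mat :: "real mat \<Rightarrow> real mat \<Rightarrow> nat \<Rightarrow> real mat" where
  "reach_mat A B l = mat (dim_row A) (dim_col B * l)
     (\<lambda>(i,j). (A ^\<^sub>m (l - 1 - j div dim_col B) * B) $$ (i, j mod dim_col B))"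

definition shift_mat :: "nat \<Rightarrow> nat \<Rightarrow> real mat" where
  "shift_mat q l = mat (q * l) (q * l) (\<lambda>(i,j). if j = i + q then 1 else 0)"

definition L_mat :: "nat \<Rightarrow> nat \<Rightarrow> nat \<Rightarrow> real mat" where
  "L_mat p m l = mat ((p + m) * l) p (\<lambda>(i,j). if i = (l - 1) * p + j then 1 else 0)"

definition Bl_mat :: "nat \<Rightarrow> nat \<Rightarrow> nat \<Rightarrow> real mat" where
  "Bl_mat p m l = mat ((p + m) * l) m (\<lambda>(i,j). if i = (p + m) * l - m + j then 1 else 0)"

definition window :: "(nat \<Rightarrow> real vec) \<Rightarrow> nat \<Rightarrow> nat \<Rightarrow> nat \<Rightarrow> real vec" where
  "window f q k l = vec (q * l) (\<lambda>i. f (k - l + i div q) $ (i mod q))"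

definition hankel :: "(nat \<Rightarrow> real vec) \<Rightarrow> nat \<Rightarrow> nat \<Rightarrow> nat \<Rightarrow> nat \<Rightarrow> real mat" where
  "hankel f q s l N = mat (q * l) N (\<lambda>(i,j). f (s + j + i div q) $ (i mod q))"

definition Z1_mat :: "real mat \<Rightarrow> real mat \<Rightarrow> real mat \<Rightarrow> nat \<Rightarrow> real mat" where
  "Z1_mat C A OL l = C * A ^\<^sub>m l * OL"

definition Z2_mat :: "real mat \<Rightarrow> real mat \<Rightarrow> real mat \<Rightarrow> real mat \<Rightarrow> nat \<Rightarrow> real mat" where
  "Z2_mat C A B OL l = C * reach_mat A B l - C * A ^\<^sub>m l * OL * toeplitz_mat C A B l"

definition Z_mat :: "real mat \<Rightarrow> real mat \<Rightarrow> real mat \<Rightarrow> real mat \<Rightarrow> nat \<Rightarrow> real mat" where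
  "Z_mat C A B OL l = hcat (Z1_mat C A OL l) (Z2_mat C A B OL l)"

end

theory Submission
  imports Defs
begin

lemma dim_hcat[simp]: "dim_row (hcat X Y) = dim_row X" "dim_col (hcat X Y) = dim_col X + dim_col Y"
  unfolding hcat_def by auto

lemma hcat_carrier[simp]: "X \<in> carrier_mat r a \<Longrightarrow> Y \<in> carrier_mat r b \<Longrightarrow> hcat X Y \<in> carrier_mat r (a+b)"
  unfolding hcat_def by auto

lemma row_hcat: "X \<in> carrier_mat r a \<Longrightarrow> Y \<in> carrier_mat r b \<Longrightarrow> i < r \<Longrightarrow> row (hcat X Y) i = row X i @\<^sub>v row Y i"
  unfolding hcat_def by (intro eq_vecI) auto

lemma hcat_mult_vec:
  assumes X: "X \<in> carrier_mat r a" and Y: "Y \<in> carrier_mat r b" and v: "v \<in> carrier_vec a" and w: "w \<in> carrier_vec b"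
  shows "hcat X Y *\<^sub>v (v @\<^sub>v w) = X *\<^sub>v v + Y *\<^sub>v w"
proof (rule eq_vecI)
  fix i assume "i < dim_vec (X *\<^sub>v v + Y *\<^sub>v w)"
  then have i: "i < r" using X Y by auto
  have "(hcat X Y *\<^sub>v (v @\<^sub>v w)) $ i = (row X i @\<^sub>v row Y i) \<bullet> (v @\<^sub>v w)"
    using i X Y by (simp add: row_hcat)
  also have "\<dots> = row X i \<bullet> v + row Y i \<bullet> w"
    by (rule scalar_prod_append) (use X Y v w i in auto)
  finally show "(hcat X Y *\<^sub>v (v @\<^sub>v w)) $ i = (X *\<^sub>v v + Y *\<^sub>v w) $ i" using i X Y by simp
qed (use X Y in auto)

lemma hcat_uminus: "X \<in> carrier_mat r a \<Longrightarrow> Y \<in> carrier_mat r b \<Longrightarrow> - hcat X Y = hcat (- X) (- Y)"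
  unfolding hcat_def by (intro eq_matI) auto

lemma hcat_assoc: "X \<in> carrier_mat r a \<Longrightarrow> Y \<in> carrier_mat r b \<Longrightarrow> W \<in> carrier_mat r c \<Longrightarrow>
   hcat X (hcat Y W) = hcat (hcat X Y) W"
  unfolding hcat_def by (intro eq_matI) auto

lemma shift_carrier[simp]: "shift_mat q l \<in> carrier_mat (q*l) (q*l)" unfolding shift_mat_def by auto

lemma shift_mult_vec: assumes v: "v \<in> carrier_vec (q*l)" and i: "i < q*l"
  shows "(shift_mat q l *\<^sub>v v) $ i = (if i + q < q*l then v $ (i+q) else 0)"
proof -
  have "(shift_mat q l *\<^sub>v v) $ i = (\<Sum>c\<in>{0..<q*l}. (if c = i + q then 1 else 0) * v $ c)"
    using v i unfolding shift_mat_def by (auto simp: scalar_prod_def intro!: sum.cong)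
  also have "\<dots> = (\<Sum>c\<in>{0..<q*l}. if c = i + q then v $ c else 0)" by (intro sum.cong) auto
  also have "\<dots> = (if i + q < q*l then v $ (i+q) else 0)" by (subst sum.delta) auto
  finally show ?thesis .
qed

lemma Lmat_carrier[simp]: "L_mat p m l \<in> carrier_mat ((p+m)*l) p" unfolding L_mat_def by auto
lemma Blmat_carrier[simp]: "Bl_mat p m l \<in> carrier_mat ((p+m)*l) m" unfolding Bl_mat_def by auto

lemma Lmat_mult_vec: assumes v: "v \<in> carrier_vec p" and i: "i < (p+m)*l"
  shows "(L_mat p m l *\<^sub>v v) $ i = (if (l-1)*p \<le> i \<and> i < (l-1)*p + p then v $ (i - (l-1)*p) else 0)"
proof -
  have "(L_mat p m l *\<^sub>v v) $ i = (\<Sum>c\<in>{0..<p}. (if i = (l-1)*p + c then 1 else 0) * v $ c)"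
    using v i unfolding L_mat_def by (auto simp: scalar_prod_def intro!: sum.cong)
  also have "\<dots> = (\<Sum>c\<in>{0..<p}. if c = i - (l-1)*p \<and> (l-1)*p \<le> i then v $ c else 0)" by (intro sum.cong) auto
  also have "\<dots> = (if (l-1)*p \<le> i \<and> i < (l-1)*p + p then v $ (i - (l-1)*p) else 0)"
    by (cases "(l-1)*p \<le> i") (auto simp: sum.delta)
  finally show ?thesis .
qed

lemma Blmat_mult_vec: assumes v: "v \<in> carrier_vec m" and i: "i < (p+m)*l"
  shows "(Bl_mat p m l *\<^sub>v v) $ i = (if (p+m)*l - m \<le> i then v $ (i - ((p+m)*l - m)) else 0)"
proof -
  have "(Bl_mat p m l *\<^sub>v v) $ i = (\<Sum>c\<in>{0..<m}. (if i = (p+m)*l - m + c then 1 else 0) * v $ c)"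
    using v i unfolding Bl_mat_def by (auto simp: scalar_prod_def intro!: sum.cong)
  also have "\<dots> = (\<Sum>c\<in>{0..<m}. if c = i - ((p+m)*l - m) \<and> (p+m)*l - m \<le> i then v $ c else 0)" by (intro sum.cong) auto
  also have "\<dots> = (if (p+m)*l - m \<le> i then v $ (i - ((p+m)*l - m)) else 0)"
    using i by (cases "(p+m)*l - m \<le> i") (auto simp: sum.delta)
  finally show ?thesis .
qed

lemma pow_mat_Suc_left: "A \<in> carrier_mat n n \<Longrightarrow> A ^\<^sub>m Suc k = A * A ^\<^sub>m k"
proof (induction k)
  case 0 then show ?case by simp
next
  case (Suc k)
  have "A ^\<^sub>m Suc (Suc k) = (A * A ^\<^sub>m k) * A" using Suc by simp
  also have "\<dots> = A * (A ^\<^sub>m k * A)" using Suc.prems by (intro assoc_mult_mat) auto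
  finally show ?case by simp
qed

definition wnd :: "(nat \<Rightarrow> real vec) \<Rightarrow> nat \<Rightarrow> nat \<Rightarrow> nat \<Rightarrow> real vec" where
  "wnd f q s l = vec (q * l) (\<lambda>i. f (s + i div q) $ (i mod q))"

lemma window_wnd: "window f q k l = wnd f q (k - l) l"
  unfolding window_def wnd_def by simp

lemma wnd_carrier[simp]: "wnd f q s l \<in> carrier_vec (q*l)" unfolding wnd_def by simp
lemma dim_wnd[simp]: "dim_vec (wnd f q s l) = q*l" unfolding wnd_def by simp

lemma div_blk: assumes "q*i \<le> (j::nat)" "j < q*i + q" shows "j div q = i" "j mod q = j - q*i"
proof -
  show "j div q = i" using assms by (intro div_nat_eqI) auto
  then show "j mod q = j - q*i" by (metis minus_div_mult_eq_mod mult.commute)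
qed

lemma wnd_Suc: assumes f: "\<And>t. f t \<in> carrier_vec q"
  shows "wnd f q s (Suc i) = wnd f q s i @\<^sub>v f (s+i)"
proof (rule eq_vecI)
  fix j assume "j < dim_vec (wnd f q s i @\<^sub>v f (s+i))"
  then have j: "j < q*i + q" using f[of "s+i"] by simp
  show "wnd f q s (Suc i) $ j = (wnd f q s i @\<^sub>v f (s+i)) $ j"
  proof (cases "j < q*i")
    case True then show ?thesis using j f[of "s+i"] by (simp add: wnd_def)
  next
    case False
    then have "j div q = i" "j mod q = j - q*i" using div_blk[of q i j] j by auto
    then show ?thesis using False j f[of "s+i"] by (simp add: wnd_def)
  qed
qed (use f[of "s+i"] in simp)

lemma dim_reach[simp]: "dim_row (reach_mat A B l) = dim_row A" "dim_col (reach_mat A B l) = dim_col B * l"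
  unfolding reach_mat_def by simp_all

lemma pow_left_vec: "A \<in> carrier_mat n n \<Longrightarrow> v \<in> carrier_vec n \<Longrightarrow> A ^\<^sub>m Suc i *\<^sub>v v = A *\<^sub>v (A ^\<^sub>m i *\<^sub>v v)"
  by (subst pow_mat_Suc_left[of A n]) (auto intro!: assoc_mult_mat_vec[of _ n n _ n])

lemma reach_carrier[simp]: "reach_mat A B l \<in> carrier_mat (dim_row A) (dim_col B * l)"
  unfolding reach_mat_def by simp

lemma reach_Suc: assumes A: "A \<in> carrier_mat n n" and B: "B \<in> carrier_mat n m"
  shows "reach_mat A B (Suc i) = hcat (A * reach_mat A B i) B"
proof (rule eq_matI)
  fix r j assume "r < dim_row (hcat (A * reach_mat A B i) B)" "j < dim_col (hcat (A * reach_mat A B i) B)"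
  then have r: "r < n" and j: "j < m*i + m" using A B by auto
  show "reach_mat A B (Suc i) $$ (r, j) = hcat (A * reach_mat A B i) B $$ (r, j)"
  proof (cases "j < m*i")
    case True
    then have m: "m > 0" by (cases m) auto
    then have jd: "j div m < i" using True by (simp add: div_less_iff_less_mult mult.commute)
    have jm: "j mod m < m" using m by simp
    have "hcat (A * reach_mat A B i) B $$ (r, j) = (A * reach_mat A B i) $$ (r,j)"
      using True A B r by (simp add: hcat_def)
    also have "\<dots> = row A r \<bullet> col (reach_mat A B i) j" using A B r True by simp
    also have "col (reach_mat A B i) j = col (A ^\<^sub>m (i - 1 - j div m) * B) (j mod m)"
      using A B True jm by (intro eq_vecI) (auto simp: reach_mat_def)
    also have "row A r \<bullet> col (A ^\<^sub>m (i - 1 - j div m) * B) (j mod m) = (A * (A ^\<^sub>m (i - 1 - j div m) * B)) $$ (r, j mod m)"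
      using A B r jm by simp
    also have "A * (A ^\<^sub>m (i - 1 - j div m) * B) = (A * A ^\<^sub>m (i - 1 - j div m)) * B"
      using A B by (intro assoc_mult_mat[symmetric]) auto
    also have "A * A ^\<^sub>m (i - 1 - j div m) = A ^\<^sub>m (Suc i - 1 - j div m)"
      using pow_mat_Suc_left[OF A, of "i - 1 - j div m"] jd by (simp add: Suc_diff_Suc)
    finally show ?thesis using A B r j by (simp add: reach_mat_def)
  next
    case False
    then have "j div m = i" "j mod m = j - m*i" using div_blk[of m i j] j by auto
    then show ?thesis using False A B r j by (simp add: reach_mat_def hcat_def scalar_prod_left_unit[OF col_carrier_vec[OF _ B]])
  qed
qed (use A B in auto)

lemma state_evol:
  assumes A: "A \<in> carrier_mat n n" and B: "B \<in> carrier_mat n m"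
    and xd: "\<And>k. x k \<in> carrier_vec n" and ud: "\<And>k. u k \<in> carrier_vec m"
    and sys: "\<And>k. k < T \<Longrightarrow> x (Suc k) = A *\<^sub>v x k + B *\<^sub>v u k"
  shows "s + i \<le> T \<Longrightarrow> x (s + i) = A ^\<^sub>m i *\<^sub>v x s + reach_mat A B i *\<^sub>v wnd u m s i"
proof (induction i)
  case 0
  have "reach_mat A B 0 *\<^sub>v wnd u m s 0 = 0\<^sub>v n"
    using A by (intro eq_vecI) (auto simp: scalar_prod_def)
  then show ?case using A xd[of s] by simp
next
  case (Suc i)
  have R: "reach_mat A B i \<in> carrier_mat n (m*i)" using reach_carrier[of A B i] A B by simp
  define a where "a = A ^\<^sub>m i *\<^sub>v x s"
  define b where "b = reach_mat A B i *\<^sub>v wnd u m s i"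
  define c where "c = B *\<^sub>v u (s+i)"
  have a: "a \<in> carrier_vec n" unfolding a_def by (rule mult_mat_vec_carrier[OF pow_carrier_mat[OF A] xd])
  have b: "b \<in> carrier_vec n" unfolding b_def using R by (simp add: mult_mat_vec_carrier)
  have c: "c \<in> carrier_vec n" unfolding c_def using B ud[of "s+i"] by (simp add: mult_mat_vec_carrier)
  have e0: "x (s + Suc i) = A *\<^sub>v x (s+i) + c" unfolding c_def using sys[of "s+i"] Suc.prems by simp
  have e1: "x (s+i) = a + b" unfolding a_def b_def using Suc by simp
  have e2: "A *\<^sub>v (a + b) = A *\<^sub>v a + A *\<^sub>v b"
    by (rule mult_add_distrib_mat_vec[OF A a b])
  have e3: "A ^\<^sub>m Suc i *\<^sub>v x s = A *\<^sub>v a" unfolding a_def by (rule pow_left_vec[OF A xd])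
  have e4: "(A * reach_mat A B i) *\<^sub>v wnd u m s i = A *\<^sub>v b"
    unfolding b_def by (rule assoc_mult_mat_vec[OF A R]) simp
  have e5: "(A * reach_mat A B i) *\<^sub>v wnd u m s i + c = reach_mat A B (Suc i) *\<^sub>v wnd u m s (Suc i)"
    unfolding c_def reach_Suc[OF A B] wnd_Suc[of u m, OF ud]
    by (rule hcat_mult_vec[symmetric, of _ n "m*i" _ m]) (use A B R ud in auto)
  have e6: "A *\<^sub>v a + A *\<^sub>v b + c = A *\<^sub>v a + (A *\<^sub>v b + c)"
    by (rule assoc_add_vec[of _ n]) (use A a b c in auto)
  have "x (s + Suc i) = A *\<^sub>v a + A *\<^sub>v b + c" by (simp only: e0 e1 e2)
  also have "\<dots> = A *\<^sub>v a + (A *\<^sub>v b + c)" by (rule e6)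
  also have "\<dots> = A ^\<^sub>m Suc i *\<^sub>v x s + ((A * reach_mat A B i) *\<^sub>v wnd u m s i + c)" by (simp only: e3 e4)
  also have "\<dots> = A ^\<^sub>m Suc i *\<^sub>v x s + reach_mat A B (Suc i) *\<^sub>v wnd u m s (Suc i)" by (simp only: e5)
  finally show ?case .
qed

lemma dim_obsv[simp]: "dim_row (obsv_mat C A l) = dim_row C * l" "dim_col (obsv_mat C A l) = dim_col A"
  unfolding obsv_mat_def by simp_all
lemma dim_toep[simp]: "dim_row (toeplitz_mat C A B l) = dim_row C * l" "dim_col (toeplitz_mat C A B l) = dim_col B * l"
  unfolding toeplitz_mat_def by simp_all

lemma mult_reach_index:
  assumes A: "A \<in> carrier_mat n n" and B: "B \<in> carrier_mat n m" and M: "M \<in> carrier_mat k n"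
    and r: "r < k" and j: "j < m * b"
  shows "(M * reach_mat A B b) $$ (r, j) = (M * (A ^\<^sub>m (b - 1 - j div m) * B)) $$ (r, j mod m)"
proof -
  have m: "m > 0" using j by (cases m) auto
  have jm: "j mod m < m" using m by simp
  have "(M * reach_mat A B b) $$ (r, j) = row M r \<bullet> col (reach_mat A B b) j" using A B M r j by simp
  also have "col (reach_mat A B b) j = col (A ^\<^sub>m (b - 1 - j div m) * B) (j mod m)"
    using A B j jm by (intro eq_vecI) (auto simp: reach_mat_def mult.commute)
  also have "row M r \<bullet> \<dots> = (M * (A ^\<^sub>m (b - 1 - j div m) * B)) $$ (r, j mod m)"
    using A B M r jm by simp
  finally show ?thesis .
qed

lemma out_window:
  assumes A: "A \<in> carrier_mat n n" and B: "B \<in> carrier_mat n m" and C: "C \<in> carrier_mat p n"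
    and xd: "\<And>k. x k \<in> carrier_vec n" and ud: "\<And>k. u k \<in> carrier_vec m"
    and sys: "\<And>k. k < T \<Longrightarrow> x (Suc k) = A *\<^sub>v x k + B *\<^sub>v u k"
    and sl: "s + l \<le> T"
  shows "wnd (\<lambda>t. C *\<^sub>v x t) p s l = obsv_mat C A l *\<^sub>v x s + toeplitz_mat C A B l *\<^sub>v wnd u m s l"
proof (rule eq_vecI)
  fix i assume "i < dim_vec (obsv_mat C A l *\<^sub>v x s + toeplitz_mat C A B l *\<^sub>v wnd u m s l)"
  then have i: "i < p * l" using C A B by simp
  define b where "b = i div p"
  define r where "r = i mod p"
  have p: "p > 0" using i by (cases p) auto
  have bl: "b < l" unfolding b_def using i p by (simp add: div_less_iff_less_mult mult.commute)
  have rp: "r < p" unfolding r_def using p by simp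
  have R: "reach_mat A B b \<in> carrier_mat n (m*b)" using reach_carrier[of A B b] A B by simp
  have xe: "x (s + b) = A ^\<^sub>m b *\<^sub>v x s + reach_mat A B b *\<^sub>v wnd u m s b"
    using state_evol[of A n B m x u T s b, OF A B xd ud sys] sl bl by linarith
  have "wnd (\<lambda>t. C *\<^sub>v x t) p s l $ i = (C *\<^sub>v x (s + b)) $ r"
    using i unfolding wnd_def b_def r_def by simp
  also have "\<dots> = (C *\<^sub>v (A ^\<^sub>m b *\<^sub>v x s)) $ r + (C *\<^sub>v (reach_mat A B b *\<^sub>v wnd u m s b)) $ r"
    unfolding xe using C A R xd rp
    by (subst mult_add_distrib_mat_vec[OF C]) (auto intro!: mult_mat_vec_carrier[of _ n n])
  also have "(C *\<^sub>v (A ^\<^sub>m b *\<^sub>v x s)) $ r = (obsv_mat C A l *\<^sub>v x s) $ i"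
  proof -
    have "(C *\<^sub>v (A ^\<^sub>m b *\<^sub>v x s)) = (C * A ^\<^sub>m b) *\<^sub>v x s"
      using C A xd by (intro assoc_mult_mat_vec[symmetric]) auto
    moreover have "row (obsv_mat C A l) i = row (C * A ^\<^sub>m b) r"
    proof (rule eq_vecI)
      have dA: "dim_row A = n" "dim_col A = n" and dC: "dim_row C = p" "dim_col C = n" using A C by auto
      fix j assume "j < dim_vec (row (C * A ^\<^sub>m b) r)"
      then have j: "j < n" by (cases "b = 0") (simp_all add: dA dC)
      show "row (obsv_mat C A l) i $ j = row (C * A ^\<^sub>m b) r $ j"
        using i j rp unfolding b_def r_def by (simp add: obsv_mat_def dA dC)
    next
      show "dim_vec (row (obsv_mat C A l) i) = dim_vec (row (C * A ^\<^sub>m b) r)" using A C by simp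
    qed
    ultimately show ?thesis using C A i rp by simp
  qed
  also have "(C *\<^sub>v (reach_mat A B b *\<^sub>v wnd u m s b)) $ r = (toeplitz_mat C A B l *\<^sub>v wnd u m s l) $ i"
  proof -
    have dA: "dim_row A = n" "dim_col A = n" and dC: "dim_row C = p" "dim_col C = n"
      and dB: "dim_row B = n" "dim_col B = m" using A B C by auto
    have CR: "C * reach_mat A B b \<in> carrier_mat p (m*b)" using C R by simp
    have "(C *\<^sub>v (reach_mat A B b *\<^sub>v wnd u m s b)) = (C * reach_mat A B b) *\<^sub>v wnd u m s b"
      using C R by (intro assoc_mult_mat_vec[symmetric]) auto
    also have "\<dots> $ r = row (C * reach_mat A B b) r \<bullet> wnd u m s b"
      by (rule index_mult_mat_vec) (use rp in \<open>simp add: dC\<close>)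
    also have "\<dots> = (\<Sum>j\<in>{0..<m*b}. row (C * reach_mat A B b) r $ j * wnd u m s b $ j)"
      unfolding scalar_prod_def by simp
    also have "\<dots> = (\<Sum>j\<in>{0..<m*b}. (C * reach_mat A B b) $$ (r, j) * wnd u m s b $ j)"
      by (intro sum.cong refl) (use rp in \<open>simp add: dC dB\<close>)
    also have "\<dots> = (\<Sum>j\<in>{0..<m*b}. toeplitz_mat C A B l $$ (i, j) * wnd u m s l $ j)"
    proof (intro sum.cong refl)
      fix j assume "j \<in> {0..<m*b}"
      then have j: "j < m*b" by simp
      have m: "m > 0" using j by (cases m) auto
      have jd: "j div m < b" by (metis j mult.commute less_mult_imp_div_less)
      have "m*b \<le> m*l" using bl by simp
      then have jl: "j < m * l" using j by linarith
      have e: "b - 1 - j div m = b - j div m - 1" by simp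
      have "(C * reach_mat A B b) $$ (r, j) = (C * (A ^\<^sub>m (b - 1 - j div m) * B)) $$ (r, j mod m)"
        by (rule mult_reach_index[OF A B C rp j])
      also have "C * (A ^\<^sub>m (b - 1 - j div m) * B) = C * A ^\<^sub>m (b - j div m - 1) * B"
        unfolding e by (rule assoc_mult_mat[symmetric, of C p n _ n B m]) (use A B C in auto)
      also have "\<dots> $$ (r, j mod m) = toeplitz_mat C A B l $$ (i, j)"
        using i jl jd unfolding toeplitz_mat_def b_def r_def by (simp add: dC dB)
      finally have "(C * reach_mat A B b) $$ (r, j) = toeplitz_mat C A B l $$ (i, j)" .
      moreover have "wnd u m s b $ j = wnd u m s l $ j" using j jl by (simp add: wnd_def)
      ultimately show "(C * reach_mat A B b) $$ (r, j) * wnd u m s b $ j = toeplitz_mat C A B l $$ (i, j) * wnd u m s l $ j"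
        by simp
    qed
    also have "\<dots> = (\<Sum>j\<in>{0..<m*l}. toeplitz_mat C A B l $$ (i, j) * wnd u m s l $ j)"
    proof -
      have mb: "m*b \<le> m*l" using bl by simp
      have z: "(\<Sum>j\<in>{m*b..<m*l}. toeplitz_mat C A B l $$ (i, j) * wnd u m s l $ j) = 0"
      proof (intro sum.neutral ballI)
        fix j assume "j \<in> {m*b..<m*l}"
        then have j1: "m*b \<le> j" and j2: "j < m*l" by auto
        have m: "m > 0" using j2 by (cases m) auto
        have "(m*b) div m \<le> j div m" by (rule div_le_mono[OF j1])
        then have "b \<le> j div m" using m by simp
        then show "toeplitz_mat C A B l $$ (i, j) * wnd u m s l $ j = 0"
          using i j2 unfolding toeplitz_mat_def b_def by (simp add: dC dB)
      qed
      have "(\<Sum>j\<in>{0..<m*b}. toeplitz_mat C A B l $$ (i, j) * wnd u m s l $ j)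
          + (\<Sum>j\<in>{m*b..<m*l}. toeplitz_mat C A B l $$ (i, j) * wnd u m s l $ j)
          = (\<Sum>j\<in>{0..<m*l}. toeplitz_mat C A B l $$ (i, j) * wnd u m s l $ j)"
        by (rule sum.atLeastLessThan_concat) (use mb in simp_all)
      then show ?thesis using z by (simp only: z add_0_right)
    qed
    also have "\<dots> = (toeplitz_mat C A B l *\<^sub>v wnd u m s l) $ i"
    proof -
      have T: "toeplitz_mat C A B l \<in> carrier_mat (p*l) (m*l)" unfolding carrier_mat_def by (simp add: dC dB)
      have "(toeplitz_mat C A B l *\<^sub>v wnd u m s l) $ i = row (toeplitz_mat C A B l) i \<bullet> wnd u m s l"
        by (rule index_mult_mat_vec) (use i in \<open>simp add: dC\<close>)
      also have "\<dots> = (\<Sum>j\<in>{0..<m*l}. row (toeplitz_mat C A B l) i $ j * wnd u m s l $ j)"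
        unfolding scalar_prod_def by simp
      also have "\<dots> = (\<Sum>j\<in>{0..<m*l}. toeplitz_mat C A B l $$ (i, j) * wnd u m s l $ j)"
        by (intro sum.cong refl) (use i in \<open>simp add: dC dB\<close>)
      finally show ?thesis by simp
    qed
    finally show ?thesis .
  qed
  finally show "wnd (\<lambda>t. C *\<^sub>v x t) p s l $ i = (obsv_mat C A l *\<^sub>v x s + toeplitz_mat C A B l *\<^sub>v wnd u m s l) $ i"
    using i C by (simp add: carrier_matD)
qed (use C A B in simp)

lemma vec_lem1: "(a::real vec) \<in> carrier_vec n \<Longrightarrow> b \<in> carrier_vec n \<Longrightarrow> c \<in> carrier_vec n \<Longrightarrow>
   a - b + c = a + (c - b)"
  unfolding carrier_vec_def by (intro eq_vecI) auto

lemma vec_lem2: "(a::real vec) \<in> carrier_vec n \<Longrightarrow> b \<in> carrier_vec n \<Longrightarrow> c \<in> carrier_vec n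
   \<Longrightarrow> d \<in> carrier_vec n \<Longrightarrow> e \<in> carrier_vec n \<Longrightarrow>
   a + c + e = (a + b) + (c + d) - b - d + e"
  unfolding carrier_vec_def by (intro eq_vecI) auto

lemma part1:
  assumes A: "A \<in> carrier_mat n n" and B: "B \<in> carrier_mat n m" and C: "C \<in> carrier_mat p n"
    and OL: "OL \<in> carrier_mat n (p * l)" and OL_left: "OL * obsv_mat C A l = 1\<^sub>m n"
    and xd: "\<And>k. x k \<in> carrier_vec n" and ud: "\<And>k. u k \<in> carrier_vec m"
    and dud: "\<And>k. du k \<in> carrier_vec m" and dyd: "\<And>k. dy k \<in> carrier_vec p"
    and sys: "\<And>k. k < T \<Longrightarrow> x (Suc k) = A *\<^sub>v x k + B *\<^sub>v u k"
    and meas_y: "\<And>k. k \<le> T \<Longrightarrow> ym k = C *\<^sub>v x k + dy k"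
    and meas_u: "\<And>k. k \<le> T \<Longrightarrow> um k = u k + du k"
    and k1: "l \<le> k" and k2: "k \<le> T"
  shows "ym k = Z1_mat C A OL l *\<^sub>v window ym p k l + Z2_mat C A B OL l *\<^sub>v window um m k l
                   - Z1_mat C A OL l *\<^sub>v window dy p k l - Z2_mat C A B OL l *\<^sub>v window du m k l + dy k"
proof -
  define s where "s = k - l"
  have sl: "s + l = k" unfolding s_def using k1 by simp
  have dA: "dim_row A = n" "dim_col A = n" and dC: "dim_row C = p" "dim_col C = n"
      and dB: "dim_row B = n" "dim_col B = m" using A B C by auto
  define Z1 where "Z1 = Z1_mat C A OL l"
  define Z2 where "Z2 = Z2_mat C A B OL l"
  define Ob where "Ob = obsv_mat C A l"
  define Tm where "Tm = toeplitz_mat C A B l"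
  define R where "R = reach_mat A B l"
  define yw where "yw = wnd (\<lambda>t. C *\<^sub>v x t) p s l"
  define w where "w = wnd u m s l"
  have Oc: "Ob \<in> carrier_mat (p*l) n" unfolding Ob_def carrier_mat_def by (simp add: dA dC)
  have Tc: "Tm \<in> carrier_mat (p*l) (m*l)" unfolding Tm_def carrier_mat_def by (simp add: dB dC)
  have Rc: "R \<in> carrier_mat n (m*l)" unfolding R_def carrier_mat_def by (simp add: dA dB)
  have Al: "A ^\<^sub>m l \<in> carrier_mat n n" using A by simp
  have Z1c: "Z1 \<in> carrier_mat p (p*l)" unfolding Z1_def Z1_mat_def using C Al OL by simp
  have Z1T: "Z1 * Tm \<in> carrier_mat p (m*l)" using Z1c Tc by simp
  have CR: "C * R \<in> carrier_mat p (m*l)" using C Rc by simp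
  have Z2e: "Z2 = C * R - Z1 * Tm" unfolding Z2_def Z2_mat_def Z1_def Z1_mat_def R_def Tm_def ..
  have ywc: "yw \<in> carrier_vec (p*l)" unfolding yw_def by simp
  have wc: "w \<in> carrier_vec (m*l)" unfolding w_def by simp
  have xs: "x s \<in> carrier_vec n" by (rule xd)
  have K2: "yw = Ob *\<^sub>v x s + Tm *\<^sub>v w" unfolding yw_def Ob_def Tm_def w_def
    using out_window[where x=x and u=u and T=T and s=s and l=l, OF A B C xd ud sys] sl k2 by simp
  have K1: "x k = A ^\<^sub>m l *\<^sub>v x s + R *\<^sub>v w" unfolding R_def w_def
    using state_evol[of A n B m x u T s l, OF A B xd ud sys] sl k2 by simp
  have Oxs: "Ob *\<^sub>v x s = yw - Tm *\<^sub>v w"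
  proof (rule eq_vecI)
    fix i assume "i < dim_vec (yw - Tm *\<^sub>v w)"
    then have i: "i < p*l" using carrier_matD(1)[OF Tc] by simp
    show "(Ob *\<^sub>v x s) $ i = (yw - Tm *\<^sub>v w) $ i"
      using i Oc Tc ywc arg_cong[OF K2, of "\<lambda>v. v $ i"] by simp
  qed (use Oc ywc carrier_matD(1)[OF Tc] in simp)
  have xs_eq: "x s = OL *\<^sub>v (yw - Tm *\<^sub>v w)"
  proof -
    have "OL *\<^sub>v (Ob *\<^sub>v x s) = (OL * Ob) *\<^sub>v x s" using OL Oc xs by simp
    also have "\<dots> = x s" using OL_left xs unfolding Ob_def by simp
    finally show ?thesis using Oxs by simp
  qed
  have Cxk: "C *\<^sub>v x k = Z1 *\<^sub>v yw + Z2 *\<^sub>v w"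
  proof -
    have v1: "Tm *\<^sub>v w \<in> carrier_vec (p*l)" using Tc wc by simp
    have e1: "C *\<^sub>v x k = C *\<^sub>v (A ^\<^sub>m l *\<^sub>v x s) + C *\<^sub>v (R *\<^sub>v w)"
      unfolding K1 by (rule mult_add_distrib_mat_vec[OF C]) (use Al xs Rc wc in auto)
    have e2: "C *\<^sub>v (A ^\<^sub>m l *\<^sub>v x s) = Z1 *\<^sub>v (yw - Tm *\<^sub>v w)"
    proof -
      have "Z1 *\<^sub>v (yw - Tm *\<^sub>v w) = (C * A ^\<^sub>m l * OL) *\<^sub>v (yw - Tm *\<^sub>v w)" unfolding Z1_def Z1_mat_def ..
      also have "\<dots> = (C * A ^\<^sub>m l) *\<^sub>v (OL *\<^sub>v (yw - Tm *\<^sub>v w))"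
        by (rule assoc_mult_mat_vec[of _ p n _ "p*l"]) (use C Al OL ywc v1 in auto)
      also have "\<dots> = (C * A ^\<^sub>m l) *\<^sub>v x s" using xs_eq by simp
      also have "\<dots> = C *\<^sub>v (A ^\<^sub>m l *\<^sub>v x s)"
        by (rule assoc_mult_mat_vec[of _ p n _ n]) (use C Al xs in auto)
      finally show ?thesis by simp
    qed
    have e3: "Z1 *\<^sub>v (yw - Tm *\<^sub>v w) = Z1 *\<^sub>v yw - Z1 *\<^sub>v (Tm *\<^sub>v w)"
      by (rule mult_minus_distrib_mat_vec[OF Z1c ywc v1])
    have e4: "Z1 *\<^sub>v (Tm *\<^sub>v w) = (Z1 * Tm) *\<^sub>v w"
      by (rule assoc_mult_mat_vec[symmetric, OF Z1c Tc wc])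
    have e5: "C *\<^sub>v (R *\<^sub>v w) = (C * R) *\<^sub>v w"
      by (rule assoc_mult_mat_vec[symmetric, OF C Rc wc])
    have e6: "Z2 *\<^sub>v w = (C * R) *\<^sub>v w - (Z1 * Tm) *\<^sub>v w"
      unfolding Z2e by (rule minus_mult_distrib_mat_vec[OF CR Z1T wc])
    have c1: "Z1 *\<^sub>v yw \<in> carrier_vec p" "(Z1 * Tm) *\<^sub>v w \<in> carrier_vec p" "(C * R) *\<^sub>v w \<in> carrier_vec p"
      using Z1c ywc Z1T CR wc by auto
    have "C *\<^sub>v x k = Z1 *\<^sub>v yw - (Z1 * Tm) *\<^sub>v w + (C * R) *\<^sub>v w"
      by (simp only: e1 e2 e3 e4 e5)
    also have "\<dots> = Z1 *\<^sub>v yw + Z2 *\<^sub>v w" unfolding e6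
      by (rule vec_lem1[OF c1])
    finally show ?thesis .
  qed
  have wy: "window ym p k l = yw + window dy p k l"
  proof (rule eq_vecI)
    fix i assume "i < dim_vec (yw + window dy p k l)"
    then have i: "i < p*l" by (simp add: window_wnd)
    have p: "p > 0" using i by (cases p) auto
    have "i div p < l" using i p by (simp add: div_less_iff_less_mult mult.commute)
    then have le: "s + i div p \<le> T" using sl k2 by linarith
    have im: "i mod p < p" using p by simp
    show "window ym p k l $ i = (yw + window dy p k l) $ i"
      using i im meas_y[OF le] dyd[of "s + i div p"] C unfolding window_wnd s_def[symmetric] yw_def wnd_def
      by simp
  qed (use ywc in \<open>simp add: window_wnd\<close>)
  have wu: "window um m k l = w + window du m k l"
  proof (rule eq_vecI)
    fix i assume "i < dim_vec (w + window du m k l)"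
    then have i: "i < m*l" by (simp add: window_wnd)
    have m: "m > 0" using i by (cases m) auto
    have "i div m < l" using i m by (simp add: div_less_iff_less_mult mult.commute)
    then have le: "s + i div m \<le> T" using sl k2 by linarith
    have im: "i mod m < m" using m by simp
    show "window um m k l $ i = (w + window du m k l) $ i"
      using i im meas_u[OF le] dud[of "s + i div m"] ud[of "s + i div m"] unfolding window_wnd s_def[symmetric] w_def wnd_def
      by simp
  qed (use wc in \<open>simp add: window_wnd\<close>)
  have dyw: "window dy p k l \<in> carrier_vec (p*l)" and duw: "window du m k l \<in> carrier_vec (m*l)"
    by (simp_all add: window_wnd)
  have Z2c: "Z2 \<in> carrier_mat p (m*l)" unfolding Z2e using CR Z1T by (simp add: minus_carrier_mat)
  have f1: "Z1 *\<^sub>v window ym p k l = Z1 *\<^sub>v yw + Z1 *\<^sub>v window dy p k l"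
    unfolding wy by (rule mult_add_distrib_mat_vec[OF Z1c ywc dyw])
  have f2: "Z2 *\<^sub>v window um m k l = Z2 *\<^sub>v w + Z2 *\<^sub>v window du m k l"
    unfolding wu by (rule mult_add_distrib_mat_vec[OF Z2c wc duw])
  have c2: "Z1 *\<^sub>v yw \<in> carrier_vec p" "Z1 *\<^sub>v window dy p k l \<in> carrier_vec p"
    "Z2 *\<^sub>v w \<in> carrier_vec p" "Z2 *\<^sub>v window du m k l \<in> carrier_vec p" "dy k \<in> carrier_vec p"
    using Z1c Z2c ywc wc dyw duw dyd by auto
  have "ym k = Z1 *\<^sub>v yw + Z2 *\<^sub>v w + dy k" using meas_y[OF k2] Cxk by simp
  also have "\<dots> = Z1 *\<^sub>v window ym p k l + Z2 *\<^sub>v window um m k l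
                   - Z1 *\<^sub>v window dy p k l - Z2 *\<^sub>v window du m k l + dy k"
    unfolding f1 f2 by (rule vec_lem2[OF c2])
  finally show ?thesis unfolding Z1_def Z2_def .
qed

lemma dim_shift[simp]: "dim_row (shift_mat q l) = q*l" "dim_col (shift_mat q l) = q*l"
  unfolding shift_mat_def by simp_all

lemma win_shift: assumes lk: "l \<le> k" and i: "i < q*l"
  shows "window f q (Suc k) l $ i = (if i + q < q*l then window f q k l $ (i+q) else f k $ (i - (l-1)*q))"
proof -
  have q: "q > 0" using i by (cases q) auto
  have l: "l > 0" using i by (cases l) auto
  show ?thesis
  proof (cases "i + q < q*l")
    case True
    have "(i+q) div q = Suc (i div q)" "(i+q) mod q = i mod q" using q by simp_all
    moreover have "Suc k - l + i div q = k - l + Suc (i div q)" using lk by simp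
    moreover have "Suc (k + i div q - l) = Suc (k + i div q) - l" using lk by simp
    ultimately show ?thesis using True i unfolding window_def by simp
  next
    case False
    have e: "q*l = q*(l-1) + q" using l by (cases l) auto
    have "q*(l-1) \<le> i" "i < q*(l-1) + q" using False i e by linarith+
    then have "i div q = l-1" "i mod q = i - q*(l-1)" using div_blk[of q "l-1" i] by auto
    moreover have "Suc k - l + (l-1) = k" using lk l by simp
    ultimately show ?thesis using False i unfolding window_def by (simp add: mult.commute)
  qed
qed

lemma dim_window[simp]: "dim_vec (window f q k l) = q*l" "window f q k l \<in> carrier_vec (q*l)"
  unfolding window_def by simp_all

lemma part2:
  assumes Z1c: "Z1 \<in> carrier_mat p (p*l)" and Z2c: "Z2 \<in> carrier_mat p (m*l)"
    and ymk: "ym k \<in> carrier_vec p" and umk: "um k \<in> carrier_vec m" and dyk: "dy k \<in> carrier_vec p"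
    and lk: "l \<le> k"
    and eq: "ym k = Z1 *\<^sub>v window ym p k l + Z2 *\<^sub>v window um m k l
                   - Z1 *\<^sub>v window dy p k l - Z2 *\<^sub>v window du m k l + dy k"
  shows "window ym p (Suc k) l @\<^sub>v window um m (Suc k) l
            = (blockdiag (shift_mat p l) (shift_mat m l) + L_mat p m l * hcat Z1 Z2) *\<^sub>v (window ym p k l @\<^sub>v window um m k l)
              + Bl_mat p m l *\<^sub>v um k
              + (L_mat p m l * hcat (hcat (1\<^sub>m p) (- Z1)) (- Z2))
                  *\<^sub>v (dy k @\<^sub>v window dy p k l @\<^sub>v window du m k l)"
proof -
  define N where "N = p*l + m*l"
  have NN: "(p+m)*l = N" unfolding N_def by (simp add: algebra_simps)
  define yw where "yw = window ym p k l"
  define uw where "uw = window um m k l"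
  define dw where "dw = window dy p k l"
  define ew where "ew = window du m k l"
  have ywc: "yw \<in> carrier_vec (p*l)" and uwc: "uw \<in> carrier_vec (m*l)"
    and dwc: "dw \<in> carrier_vec (p*l)" and ewc: "ew \<in> carrier_vec (m*l)"
    unfolding yw_def uw_def dw_def ew_def by simp_all
  define v where "v = yw @\<^sub>v uw"
  have vc: "v \<in> carrier_vec N" unfolding v_def N_def using ywc uwc by simp
  define F where "F = blockdiag (shift_mat p l) (shift_mat m l)"
  have Fe: "F = four_block_mat (shift_mat p l) (0\<^sub>m (p*l) (m*l)) (0\<^sub>m (m*l) (p*l)) (shift_mat m l)"
    unfolding F_def blockdiag_def by (simp add: shift_mat_def)
  have Fc: "F \<in> carrier_mat N N" unfolding Fe N_def by (rule four_block_carrier_mat) simp_all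
  have Fv: "F *\<^sub>v v = (shift_mat p l *\<^sub>v yw) @\<^sub>v (shift_mat m l *\<^sub>v uw)"
    unfolding Fe v_def by (rule mult_mat_vec_split) (use ywc uwc in simp_all)
  define Lm where "Lm = L_mat p m l"
  define Bm where "Bm = Bl_mat p m l"
  have Lc: "Lm \<in> carrier_mat N p" unfolding Lm_def using Lmat_carrier[of p m l] NN by simp
  have Bc: "Bm \<in> carrier_mat N m" unfolding Bm_def using Blmat_carrier[of p m l] NN by simp
  define HZ where "HZ = hcat Z1 Z2"
  have HZc: "HZ \<in> carrier_mat p N" unfolding HZ_def N_def using Z1c Z2c by simp
  have HZv: "HZ *\<^sub>v v = Z1 *\<^sub>v yw + Z2 *\<^sub>v uw"
    unfolding HZ_def v_def by (rule hcat_mult_vec[OF Z1c Z2c ywc uwc])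
  define W where "W = hcat (hcat (1\<^sub>m p) (- Z1)) (- Z2)"
  have mZ1: "- Z1 \<in> carrier_mat p (p*l)" and mZ2: "- Z2 \<in> carrier_mat p (m*l)" using Z1c Z2c by auto
  have We: "W = hcat (1\<^sub>m p) (hcat (- Z1) (- Z2))" unfolding W_def
    by (rule hcat_assoc[symmetric, of _ p p _ "p*l" _ "m*l"]) (use mZ1 mZ2 in auto)
  define d where "d = dy k @\<^sub>v dw @\<^sub>v ew"
  have dc: "d \<in> carrier_vec (p + N)" unfolding d_def N_def using dyk dwc ewc by simp
  have Wc: "W \<in> carrier_mat p (p + N)" unfolding We N_def using mZ1 mZ2 by simp
  have Wd: "W *\<^sub>v d = dy k + (- Z1 *\<^sub>v dw + - Z2 *\<^sub>v ew)"
    unfolding We d_def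
    using hcat_mult_vec[OF one_carrier_mat hcat_carrier[OF mZ1 mZ2] dyk append_carrier_vec[OF dwc ewc]]
      hcat_mult_vec[OF mZ1 mZ2 dwc ewc] dyk by simp
  have LHZ: "(F + Lm * HZ) *\<^sub>v v = F *\<^sub>v v + Lm *\<^sub>v (HZ *\<^sub>v v)"
  proof -
    have "(F + Lm * HZ) *\<^sub>v v = F *\<^sub>v v + (Lm * HZ) *\<^sub>v v"
      by (rule add_mult_distrib_mat_vec[OF Fc _ vc]) (use Lc HZc in simp)
    also have "(Lm * HZ) *\<^sub>v v = Lm *\<^sub>v (HZ *\<^sub>v v)" by (rule assoc_mult_mat_vec[OF Lc HZc vc])
    finally show ?thesis .
  qed
  have LW: "(Lm * W) *\<^sub>v d = Lm *\<^sub>v (W *\<^sub>v d)" by (rule assoc_mult_mat_vec[OF Lc Wc dc])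
  define a where "a = Z1 *\<^sub>v yw + Z2 *\<^sub>v uw"
  define b where "b = dy k + (- Z1 *\<^sub>v dw + - Z2 *\<^sub>v ew)"
  have ac: "a \<in> carrier_vec p" unfolding a_def using Z1c Z2c ywc uwc by simp
  have bc: "b \<in> carrier_vec p" unfolding b_def using Z1c Z2c dwc ewc dyk by simp
  have ab: "\<And>j. j < p \<Longrightarrow> a $ j + b $ j = ym k $ j"
  proof -
    fix j assume j: "j < p"
    have "ym k $ j = (Z1 *\<^sub>v yw) $ j + (Z2 *\<^sub>v uw) $ j - (Z1 *\<^sub>v dw) $ j - (Z2 *\<^sub>v ew) $ j + dy k $ j"
      using eq j Z1c Z2c dyk unfolding yw_def uw_def dw_def ew_def by simp
    moreover have "(- Z1 *\<^sub>v dw) $ j = - ((Z1 *\<^sub>v dw) $ j)" "(- Z2 *\<^sub>v ew) $ j = - ((Z2 *\<^sub>v ew) $ j)"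
      using j Z1c Z2c dwc ewc by simp_all
    ultimately show "a $ j + b $ j = ym k $ j" unfolding a_def b_def using j Z1c Z2c dwc ewc dyk ywc uwc by simp
  qed
  have main: "window ym p (Suc k) l @\<^sub>v window um m (Suc k) l = F *\<^sub>v v + Lm *\<^sub>v a + Bm *\<^sub>v um k + Lm *\<^sub>v b"
  proof (rule eq_vecI)
    show "dim_vec (window ym p (Suc k) l @\<^sub>v window um m (Suc k) l) = dim_vec (F *\<^sub>v v + Lm *\<^sub>v a + Bm *\<^sub>v um k + Lm *\<^sub>v b)"
      using Lc N_def by simp
    fix i assume "i < dim_vec (F *\<^sub>v v + Lm *\<^sub>v a + Bm *\<^sub>v um k + Lm *\<^sub>v b)"
    then have iN: "i < N" using Lc by simp
    then have iN': "i < (p+m)*l" using NN by simp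
    have r1: "(F *\<^sub>v v + Lm *\<^sub>v a + Bm *\<^sub>v um k + Lm *\<^sub>v b) $ i
        = (F *\<^sub>v v) $ i + (Lm *\<^sub>v a) $ i + (Bm *\<^sub>v um k) $ i + (Lm *\<^sub>v b) $ i"
      using iN Fc Lc Bc by simp
    have La: "(Lm *\<^sub>v a) $ i = (if (l-1)*p \<le> i \<and> i < (l-1)*p + p then a $ (i - (l-1)*p) else 0)"
      unfolding Lm_def by (rule Lmat_mult_vec[OF ac iN'])
    have Lb: "(Lm *\<^sub>v b) $ i = (if (l-1)*p \<le> i \<and> i < (l-1)*p + p then b $ (i - (l-1)*p) else 0)"
      unfolding Lm_def by (rule Lmat_mult_vec[OF bc iN'])
    have Bu: "(Bm *\<^sub>v um k) $ i = (if (p+m)*l - m \<le> i then um k $ (i - ((p+m)*l - m)) else 0)"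
      unfolding Bm_def by (rule Blmat_mult_vec[OF umk iN'])
    have l: "l > 0" using iN unfolding N_def by (cases l) auto
    have ep: "p*l = (l-1)*p + p" and em: "m*l = (l-1)*m + m" using l by (cases l; simp add: algebra_simps)+
    have eN: "(p+m)*l = p*l + m*l" by (simp add: algebra_simps)
    show "(window ym p (Suc k) l @\<^sub>v window um m (Suc k) l) $ i = (F *\<^sub>v v + Lm *\<^sub>v a + Bm *\<^sub>v um k + Lm *\<^sub>v b) $ i"
    proof (cases "i < p*l")
      case True
      have Fi: "(F *\<^sub>v v) $ i = (if i + p < p*l then yw $ (i+p) else 0)"
        using shift_mult_vec[OF ywc True] True unfolding Fv by (simp del: index_mult_mat_vec)
      have Bz: "(Bm *\<^sub>v um k) $ i = 0" using Bu True eN em by auto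
      have lhs: "(window ym p (Suc k) l @\<^sub>v window um m (Suc k) l) $ i = window ym p (Suc k) l $ i"
        using True by simp
      show ?thesis
      proof (cases "i + p < p*l")
        case True2: True
        have "(Lm *\<^sub>v a) $ i = 0" "(Lm *\<^sub>v b) $ i = 0" using La Lb True2 ep by auto
        then show ?thesis unfolding r1 lhs using Fi Bz True2 win_shift[OF lk True] unfolding yw_def by simp
      next
        case False2: False
        have c: "(l-1)*p \<le> i \<and> i < (l-1)*p + p" using False2 True ep by linarith
        have "(Lm *\<^sub>v a) $ i + (Lm *\<^sub>v b) $ i = ym k $ (i - (l-1)*p)"
          using La Lb c ab[of "i - (l-1)*p"] by auto
        then show ?thesis unfolding r1 lhs using Fi Bz False2 win_shift[OF lk True] by simp
      qed
    next
      case False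
      define i' where "i' = i - p*l"
      have i'm: "i' < m*l" unfolding i'_def using iN False N_def by linarith
      have ii: "i = p*l + i'" unfolding i'_def using False by simp
      have Fi: "(F *\<^sub>v v) $ i = (if i' + m < m*l then uw $ (i'+m) else 0)"
        using shift_mult_vec[OF uwc i'm] False iN unfolding Fv i'_def N_def by (simp del: index_mult_mat_vec)
      have Lz: "(Lm *\<^sub>v a) $ i = 0" "(Lm *\<^sub>v b) $ i = 0" using La Lb False ep by auto
      have lhs: "(window ym p (Suc k) l @\<^sub>v window um m (Suc k) l) $ i = window um m (Suc k) l $ i'"
        using False iN N_def unfolding i'_def by simp
      show ?thesis
      proof (cases "i' + m < m*l")
        case True2: True
        have "(Bm *\<^sub>v um k) $ i = 0" using Bu True2 eN ii by auto
        then show ?thesis unfolding r1 lhs using Fi Lz True2 win_shift[OF lk i'm] unfolding uw_def by simp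
      next
        case False2: False
        have "(Bm *\<^sub>v um k) $ i = um k $ (i' - (l-1)*m)"
        proof -
          have c: "(p+m)*l - m \<le> i" using False2 ii eN em by linarith
          have ar: "i - ((p+m)*l - m) = i' - (l-1)*m" using ii eN em by linarith
          show ?thesis using Bu c ar by simp
        qed
        moreover obtain l0 where l0: "l = Suc l0" using l by (cases l) auto
        ultimately show ?thesis unfolding r1 lhs using Fi Lz False2 win_shift[OF lk i'm] by simp
      qed
    qed
  qed
  have "(F + Lm * HZ) *\<^sub>v v + Bm *\<^sub>v um k + (Lm * W) *\<^sub>v d = F *\<^sub>v v + Lm *\<^sub>v a + Bm *\<^sub>v um k + Lm *\<^sub>v b"
    unfolding LHZ LW HZv Wd a_def b_def ..
  with main show ?thesis unfolding F_def Lm_def HZ_def Bm_def W_def d_def v_def yw_def uw_def dw_def ew_def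
    by simp
qed

lemma mat_col: "i < dim_row M \<Longrightarrow> j < dim_col P \<Longrightarrow> (M * P) $$ (i,j) = (M *\<^sub>v col P j) $ i"
  by simp

theorem lemma4:
  fixes A B C OL :: "real mat" and n m p l T :: nat
    and x u du dy um ym :: "nat \<Rightarrow> real vec"
  assumes A: "A \<in> carrier_mat n n" and B: "B \<in> carrier_mat n m" and C: "C \<in> carrier_mat p n"
    and obs: "observable C A" and l_def: "l = obs_index C A"
    and OL: "OL \<in> carrier_mat n (p * l)" and OL_left: "OL * obsv_mat C A l = 1\<^sub>m n"
    and lT: "l \<le> T"
    and dims: "\<And>k. x k \<in> carrier_vec n \<and> u k \<in> carrier_vec m
                   \<and> du k \<in> carrier_vec m \<and> dy k \<in> carrier_vec p"
    and sys: "\<And>k. k < T \<Longrightarrow> x (Suc k) = A *\<^sub>v x k + B *\<^sub>v u k"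
    and meas_y: "\<And>k. k \<le> T \<Longrightarrow> ym k = C *\<^sub>v x k + dy k"
    and meas_u: "\<And>k. k \<le> T \<Longrightarrow> um k = u k + du k"
  defines "F \<equiv> blockdiag (shift_mat p l) (shift_mat m l)"
    and "Lm \<equiv> L_mat p m l"
    and "Bm \<equiv> Bl_mat p m l"
    and "AA \<equiv> blockdiag (shift_mat p l) (shift_mat m l) + L_mat p m l * Z_mat C A B OL l"
    and "Bd \<equiv> L_mat p m l * hcat (hcat (1\<^sub>m p) (- Z1_mat C A OL l)) (- Z2_mat C A B OL l)"
    and "Psi1 \<equiv> vcat (hankel ym p 1 l (T - l + 1)) (hankel um m 1 l (T - l + 1))"
    and "Psi0 \<equiv> vcat (hankel ym p 0 l (T - l + 1)) (hankel um m 0 l (T - l + 1))"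
    and "U1 \<equiv> hankel um m l 1 (T - l + 1)"
    and "Delta10 \<equiv> vcat (hankel dy p l 1 (T - l + 1)) (vcat (hankel dy p 0 l (T - l + 1)) (hankel du m 0 l (T - l + 1)))"
  shows "let Z1 = Z1_mat C A OL l; Z2 = Z2_mat C A B OL l; Z = Z_mat C A B OL l in (\<forall>k \<in> {l..T}.
            ym k = Z1 *\<^sub>v window ym p k l + Z2 *\<^sub>v window um m k l
                   - Z1 *\<^sub>v window dy p k l - Z2 *\<^sub>v window du m k l + dy k)
       \<and> (\<forall>k \<in> {l..T}.
            window ym p (Suc k) l @\<^sub>v window um m (Suc k) l
            = (F + Lm * hcat Z1 Z2) *\<^sub>v (window ym p k l @\<^sub>v window um m k l)
              + Bm *\<^sub>v um k
              + (Lm * hcat (hcat (1\<^sub>m p) (- Z1)) (- Z2))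
                  *\<^sub>v (dy k @\<^sub>v window dy p k l @\<^sub>v window du m k l))
       \<and> Psi1 = (F + Lm * Z) * Psi0 + Bm * U1 + Lm * hcat (1\<^sub>m p) (- Z) * Delta10
       \<and> (F + Lm * Z) * Psi0 + Bm * U1 + Lm * hcat (1\<^sub>m p) (- Z) * Delta10
           = AA * Psi0 + Bm * U1 + Bd * Delta10"
proof -
  define Z1 where "Z1 = Z1_mat C A OL l"
  define Z2 where "Z2 = Z2_mat C A B OL l"
  define Z where "Z = Z_mat C A B OL l"
  have dA: "dim_row A = n" "dim_col A = n" and dC: "dim_row C = p" "dim_col C = n"
      and dB: "dim_row B = n" "dim_col B = m" using A B C by auto
  have xd: "\<And>k. x k \<in> carrier_vec n" and ud: "\<And>k. u k \<in> carrier_vec m"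
    and dud: "\<And>k. du k \<in> carrier_vec m" and dyd: "\<And>k. dy k \<in> carrier_vec p" using dims by auto
  have Al: "A ^\<^sub>m l \<in> carrier_mat n n" using A by simp
  have Z1c: "Z1 \<in> carrier_mat p (p*l)" unfolding Z1_def Z1_mat_def using C Al OL by simp
  have Tc: "toeplitz_mat C A B l \<in> carrier_mat (p*l) (m*l)" unfolding carrier_mat_def by (simp add: dB dC)
  have Rc: "reach_mat A B l \<in> carrier_mat n (m*l)" unfolding carrier_mat_def by (simp add: dA dB)
  have Z2c: "Z2 \<in> carrier_mat p (m*l)"
  proof -
    have "C * reach_mat A B l \<in> carrier_mat p (m*l)" using C Rc by simp
    moreover have "C * A ^\<^sub>m l * OL * toeplitz_mat C A B l \<in> carrier_mat p (m*l)"
      by (rule mult_carrier_mat[OF mult_carrier_mat[OF mult_carrier_mat[OF C Al] OL] Tc])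
    ultimately show ?thesis unfolding Z2_def Z2_mat_def by (simp add: minus_carrier_mat)
  qed
  have Ze: "Z = hcat Z1 Z2" unfolding Z_def Z_mat_def Z1_def Z2_def ..
  have ymd: "\<And>k. k \<le> T \<Longrightarrow> ym k \<in> carrier_vec p" using meas_y C xd dyd by simp
  have umd: "\<And>k. k \<le> T \<Longrightarrow> um k \<in> carrier_vec m" using meas_u ud dud by simp
  have P1: "\<forall>k \<in> {l..T}. ym k = Z1 *\<^sub>v window ym p k l + Z2 *\<^sub>v window um m k l
                   - Z1 *\<^sub>v window dy p k l - Z2 *\<^sub>v window du m k l + dy k"
    unfolding Z1_def Z2_def
    using part1[where x=x and u=u and du=du and dy=dy and T=T and ym=ym and um=um, OF A B C OL OL_left xd ud dud dyd sys meas_y meas_u] by auto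
  have P2: "\<forall>k \<in> {l..T}.
            window ym p (Suc k) l @\<^sub>v window um m (Suc k) l
            = (F + Lm * hcat Z1 Z2) *\<^sub>v (window ym p k l @\<^sub>v window um m k l)
              + Bm *\<^sub>v um k
              + (Lm * hcat (hcat (1\<^sub>m p) (- Z1)) (- Z2))
                  *\<^sub>v (dy k @\<^sub>v window dy p k l @\<^sub>v window du m k l)"
  proof
    fix k assume k: "k \<in> {l..T}"
    show "window ym p (Suc k) l @\<^sub>v window um m (Suc k) l
            = (F + Lm * hcat Z1 Z2) *\<^sub>v (window ym p k l @\<^sub>v window um m k l)
              + Bm *\<^sub>v um k
              + (Lm * hcat (hcat (1\<^sub>m p) (- Z1)) (- Z2))
                  *\<^sub>v (dy k @\<^sub>v window dy p k l @\<^sub>v window du m k l)"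
      unfolding F_def Lm_def Bm_def
      by (rule part2[OF Z1c Z2c ymd umd dyd]) (use k P1 in auto)
  qed
  have hZ: "hcat (1\<^sub>m p) (- Z) = hcat (hcat (1\<^sub>m p) (- Z1)) (- Z2)"
    unfolding Ze using hcat_uminus[OF Z1c Z2c] hcat_assoc[of "1\<^sub>m p" p p "- Z1" "p*l" "- Z2" "m*l"] Z1c Z2c
    by simp
  have P4: "(F + Lm * Z) * Psi0 + Bm * U1 + Lm * hcat (1\<^sub>m p) (- Z) * Delta10
           = AA * Psi0 + Bm * U1 + Bd * Delta10"
    unfolding hZ unfolding AA_def Bd_def F_def Lm_def Z_def Z1_def Z2_def ..
  have P3: "Psi1 = (F + Lm * Z) * Psi0 + Bm * U1 + Lm * hcat (1\<^sub>m p) (- Z) * Delta10"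
  proof -
    define N where "N = T - l + 1"
    define W where "W = Lm * hcat (hcat (1\<^sub>m p) (- Z1)) (- Z2)"
    define X where "X = F + Lm * hcat Z1 Z2"
    have re: "(F + Lm * Z) * Psi0 + Bm * U1 + Lm * hcat (1\<^sub>m p) (- Z) * Delta10 = X * Psi0 + Bm * U1 + W * Delta10"
      unfolding hZ unfolding X_def W_def Ze ..
    have dP1: "dim_row Psi1 = p*l + m*l" "dim_col Psi1 = N" unfolding Psi1_def N_def vcat_def hankel_def by simp_all
    have dP0: "dim_row Psi0 = p*l + m*l" "dim_col Psi0 = N" unfolding Psi0_def N_def vcat_def hankel_def by simp_all
    have dU1: "dim_row U1 = m" "dim_col U1 = N" unfolding U1_def N_def hankel_def by simp_all
    have dD: "dim_row Delta10 = p + (p*l + m*l)" "dim_col Delta10 = N" unfolding Delta10_def N_def vcat_def hankel_def by simp_all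
    have dL: "dim_row Lm = (p+m)*l" "dim_col Lm = p" unfolding Lm_def L_mat_def by simp_all
    have dBm: "dim_row Bm = (p+m)*l" "dim_col Bm = m" unfolding Bm_def Bl_mat_def by simp_all
    have dX: "dim_row X = (p+m)*l" "dim_col X = p*l + m*l" unfolding X_def using dL Z1c Z2c by auto
    have dW: "dim_row W = (p+m)*l" "dim_col W = p + (p*l + m*l)" unfolding W_def using dL Z1c Z2c by auto
    have NN: "(p+m)*l = p*l + m*l" by (simp add: algebra_simps)
    show ?thesis unfolding re
    proof (rule eq_matI)
      fix i j assume "i < dim_row (X * Psi0 + Bm * U1 + W * Delta10)" "j < dim_col (X * Psi0 + Bm * U1 + W * Delta10)"
      then have i: "i < (p+m)*l" and j: "j < N" using dW dD by auto
      define k where "k = l + j"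
      have kT: "k \<in> {l..T}" unfolding k_def using j lT unfolding N_def by auto
      have cP0: "col Psi0 j = window ym p k l @\<^sub>v window um m k l"
      proof (rule eq_vecI)
        fix r assume "r < dim_vec (window ym p k l @\<^sub>v window um m k l)"
        then have r: "r < p*l + m*l" by simp
        show "col Psi0 j $ r = (window ym p k l @\<^sub>v window um m k l) $ r"
          using r j unfolding Psi0_def vcat_def hankel_def window_def k_def N_def by auto
      qed (use dP0 in simp)
      have cP1: "col Psi1 j = window ym p (Suc k) l @\<^sub>v window um m (Suc k) l"
      proof (rule eq_vecI)
        fix r assume "r < dim_vec (window ym p (Suc k) l @\<^sub>v window um m (Suc k) l)"
        then have r: "r < p*l + m*l" by simp
        show "col Psi1 j $ r = (window ym p (Suc k) l @\<^sub>v window um m (Suc k) l) $ r"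
          using r j unfolding Psi1_def vcat_def hankel_def window_def k_def N_def by auto
      qed (use dP1 in simp)
      have umk: "um k \<in> carrier_vec m" using umd kT by simp
      have dyk: "dy k \<in> carrier_vec p" using dyd by simp
      have cU1: "col U1 j = um k"
      proof (rule eq_vecI)
        fix r assume "r < dim_vec (um k)"
        then have r: "r < m" using umk by simp
        show "col U1 j $ r = um k $ r"
          using r j unfolding U1_def hankel_def k_def N_def by auto
      qed (use dU1 umk in simp)
      have cD: "col Delta10 j = dy k @\<^sub>v window dy p k l @\<^sub>v window du m k l"
      proof (rule eq_vecI)
        fix r assume "r < dim_vec (dy k @\<^sub>v window dy p k l @\<^sub>v window du m k l)"
        then have r: "r < p + (p*l + m*l)" using dyk by simp
        show "col Delta10 j $ r = (dy k @\<^sub>v window dy p k l @\<^sub>v window du m k l) $ r"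
          using r j dyk unfolding Delta10_def vcat_def hankel_def window_def k_def N_def by auto
      qed (use dD dyk in simp)
      have v1: "(X *\<^sub>v col Psi0 j) \<in> carrier_vec ((p+m)*l)" "(Bm *\<^sub>v col U1 j) \<in> carrier_vec ((p+m)*l)"
        "(W *\<^sub>v col Delta10 j) \<in> carrier_vec ((p+m)*l)" unfolding carrier_vec_def mem_Collect_eq dim_mult_mat_vec by (simp_all only: dX dBm dW)
      have "(X * Psi0 + Bm * U1 + W * Delta10) $$ (i, j) = (X * Psi0) $$ (i,j) + (Bm * U1) $$ (i,j) + (W * Delta10) $$ (i,j)"
        using i j by (simp add: dX dP0 dBm dU1 dW dD)
      also have "\<dots> = (X *\<^sub>v col Psi0 j) $ i + (Bm *\<^sub>v col U1 j) $ i + (W *\<^sub>v col Delta10 j) $ i"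
        using i j by (simp add: dX dP0 dBm dU1 dW dD del: index_mult_mat index_mult_mat_vec add: mat_col)
      also have "\<dots> = (X *\<^sub>v col Psi0 j + Bm *\<^sub>v col U1 j + W *\<^sub>v col Delta10 j) $ i"
        using i by (simp add: dX dBm dW del: index_mult_mat_vec)
      also have "X *\<^sub>v col Psi0 j + Bm *\<^sub>v col U1 j + W *\<^sub>v col Delta10 j = col Psi1 j"
        unfolding cP0 cP1 cU1 cD X_def W_def by (rule sym[OF bspec[OF P2 kT]])
      also have "col Psi1 j $ i = Psi1 $$ (i, j)" using i j by (simp add: dP1 NN)
      finally show "Psi1 $$ (i, j) = (X * Psi0 + Bm * U1 + W * Delta10) $$ (i, j)" by simp
    qed (use dP1 dX dD dW NN in auto)
  qed
  show ?thesis unfolding Let_def Z1_def[symmetric] Z2_def[symmetric] Z_def[symmetric]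
    using P1 P2 P3 P4 Ze by simp
qed

end
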